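(* Let $N\ge 1$, let $a_1,\dots,a_N>0$, $T_1,\dots,T_N\ge 0$ and $P_{\mathrm{tot}}>0$. For $P_i\ge 0$ let $r_i(P_i)=\log_2(1+a_iP_i)$ and $J(\mathbf P)=\sum_{i=1}^N (r_i(P_i)-T_i)^2$ for $\mathbf P=(P_1,\dots,P_N)$. Consider the problem of minimizing $J(\mathbf P)$ subject to $\sum_{i=1}^N P_i\le P_{\mathrm{tot}}$ and $P_i\ge 0$ for all $i$. If $\mathbf P^*=(P_1^*,\dots,P_N^* )$ is an optimal solution of this problem, then $r_i(P_i^* )\le T_i$ for all $i=1,\dots,N$. *)

theory Defs
  imports Complex_Main
begin

definition rate :: "(nat \<Rightarrow> real) \<Rightarrow> nat \<Rightarrow> real \<Rightarrow> real" where
  "rate a i p = log 2 (1 + a i * p)"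

definition J :: "nat \<Rightarrow> (nat \<Rightarrow> real) \<Rightarrow> (nat \<Rightarrow> real) \<Rightarrow> (nat \<Rightarrow> real) \<Rightarrow> real" where
  "J N a T P = (\<Sum>i=1..N. (rate a i (P i) - T i)^2)"

definition feasible :: "nat \<Rightarrow> real \<Rightarrow> (nat \<Rightarrow> real) \<Rightarrow> bool" where
  "feasible N Ptot P \<longleftrightarrow> (\<forall>i\<in>{1..N}. P i \<ge> 0) \<and> (\<Sum>i=1..N. P i) \<le> Ptot"

definition optimal :: "nat \<Rightarrow> (nat \<Rightarrow> real) \<Rightarrow> (nat \<Rightarrow> real) \<Rightarrow> real \<Rightarrow> (nat \<Rightarrow> real) \<Rightarrow> bool" where
  "optimal N a T Ptot P \<longleftrightarrow> feasible N Ptot P \<and>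
     (\<forall>Q. feasible N Ptot Q \<longrightarrow> J N a T P \<le> J N a T Q)"

end

theory Submission
  imports Defs
begin

theorem theorem1:
  fixes N :: nat and a T P :: "nat \<Rightarrow> real" and Ptot :: real
  assumes "N \<ge> 1"
    and "\<forall>i\<in>{1..N}. a i > 0"
    and "\<forall>i\<in>{1..N}. T i \<ge> 0"
    and "Ptot > 0"
    and "optimal N a T Ptot P"
  shows "\<forall>i\<in>{1..N}. rate a i (P i) \<le> T i"
proof (rule ccontr)
  assume "\<not> ?thesis"
  then obtain k where k: "k \<in> {1..N}" and gt: "rate a k (P k) > T k" by force
  have ak: "a k > 0" using assms(2) k by blast
  have Tk: "T k \<ge> 0" using assms(3) k by blast
  have feasP: "feasible N Ptot P" and opt: "\<And>Q. feasible N Ptot Q \<Longrightarrow> J N a T P \<le> J N a T Q"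
    using assms(5) unfolding optimal_def by auto
  have Pk: "P k \<ge> 0" using feasP k unfolding feasible_def by blast
  define p0 where "p0 = (2 powr T k - 1) / a k"
  have p0ge: "p0 \<ge> 0" unfolding p0_def using ak Tk
    by (simp add: ge_one_powr_ge_zero)
  have rp0: "rate a k p0 = T k" unfolding rate_def p0_def using ak by simp
  have pos: "1 + a k * P k > 0" using ak Pk by (simp add: add_pos_nonneg)
  have "log 2 (1 + a k * P k) > T k" using gt unfolding rate_def by simp
  hence "1 + a k * P k > 2 powr T k"
    using pos by (simp add: less_log_iff)
  hence "p0 < P k" unfolding p0_def using ak by (simp add: field_simps)
  define Q where "Q = P(k := p0)"
  have fin: "finite {1..N}" by simp
  have eqr: "(\<Sum>i\<in>{1..N}-{k}. Q i) = (\<Sum>i\<in>{1..N}-{k}. P i)"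
    by (rule sum.cong) (auto simp: Q_def)
  have sQ: "(\<Sum>i=1..N. Q i) = (\<Sum>i=1..N. P i) - P k + p0"
    using sum.remove[OF fin k, of Q] sum.remove[OF fin k, of P] eqr
    by (simp add: Q_def)
  have feasQ: "feasible N Ptot Q"
    using feasP p0ge \<open>p0 < P k\<close> sQ unfolding feasible_def Q_def by auto
  have eqJ: "(\<Sum>i\<in>{1..N}-{k}. (rate a i (Q i) - T i)^2) = (\<Sum>i\<in>{1..N}-{k}. (rate a i (P i) - T i)^2)"
    by (rule sum.cong) (auto simp: Q_def)
  have JQ: "J N a T Q = J N a T P - (rate a k (P k) - T k)^2"
    using sum.remove[OF fin k, of "\<lambda>i. (rate a i (Q i) - T i)^2"]
      sum.remove[OF fin k, of "\<lambda>i. (rate a i (P i) - T i)^2"] rp0 eqJ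
    unfolding J_def by (simp add: Q_def)
  have "(rate a k (P k) - T k)^2 > 0" using gt by simp
  with JQ opt[OF feasQ] show False by simp
qed

end
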